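(* For any poset $P$ on $\{1,2,\ldots,n\}$ and field $k$, the three rings $R_P$, $\mathfrak{gr}(R_P)$ and $S/I^{\mathrm{init}}_P$ share the same $\mathbb{N}^n$-graded Hilbert series, namely $\sum_{f\in\mathcal{A}^{\mathrm{weak}}(P)}\mathbf{x}^f$.
   Context: All posets are finite. $\mathcal{A}^{\mathrm{weak}}(P)$ is the set of maps $f:\{1,\ldots,n\}\to\mathbb{N}$ with $f(i)\ge f(j)$ whenever $i<_Pj$; $\mathbf{x}^f=\prod_ix_i^{f(i)}$. $R_P\subseteq k[x_1,\ldots,x_n]$ is the $k$-span of the $\mathbf{x}^f$, $f\in\mathcal{A}^{\mathrm{weak}}(P)$, $\mathbb{N}^n$-graded with $\mathbf{x}^f$ of degree $f$. $\mathfrak{m}$ is the ideal spanned by $\mathbf{x}^f$ with $f\ne0$, and $\mathfrak{gr}(R_P)=\bigoplus_i\mathfrak{m}^i/\mathfrak{m}^{i+1}$ with the induced $\mathbb{N}^n$-grading. A connected order ideal is a nonempty downward-closed subset whose induced Hasse diagram is connected; $\mathcal{J}_{\mathrm{conn}}(P)$ is the set of these. Two connected order ideals intersect nontrivially if they are neither disjoint nor nested; $\Pi(P)$ is the set of such unordered pairs. $S=k[U_J]_{J\in\mathcal{J}_{\mathrm{conn}}(P)}$, $\mathbb{N}^n$-graded with $U_J$ of degree the indicator vector $\chi_J$, and $I^{\mathrm{init}}_P$ is the ideal of $S$ generated by $U_{J_1}U_{J_2}$ for $\{J_1,J_2\}\in\Pi(P)$. *)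

theory Defs
  imports "HOL-Analysis.Analysis" "HOL-Library.Poly_Mapping" "HOL-Library.Groups_Big_Fun"
begin

(* Polynomials over the field 'k in variables indexed by 'v are
   finitely supported maps  ('v \<Rightarrow>\<^sub>0 nat) \<Rightarrow>\<^sub>0 'k  (monomial exponent \<mapsto> coefficient),
   with the convolution product of HOL-Library.Poly_Mapping. *)

type_synonym ('v, 'k) mpoly = "('v \<Rightarrow>\<^sub>0 nat) \<Rightarrow>\<^sub>0 'k"

definition psmult :: "'k::field \<Rightarrow> ('v, 'k) mpoly \<Rightarrow> ('v, 'k) mpoly" where
  "psmult c p = Poly_Mapping.map (\<lambda>a. c * a) p"

definition kspan :: "('v, 'k::field) mpoly set \<Rightarrow> ('v, 'k) mpoly set" where
  "kspan A = module.span psmult A"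

definition kdim :: "('v, 'k::field) mpoly set \<Rightarrow> nat" where
  "kdim A = vector_space.dim psmult A"

definition monom :: "('v \<Rightarrow>\<^sub>0 nat) \<Rightarrow> ('v, 'k::field) mpoly" where
  "monom f = Poly_Mapping.single f 1"

definition poset_on :: "nat \<Rightarrow> nat rel \<Rightarrow> bool" where
  "poset_on n r \<longleftrightarrow> r \<subseteq> {1..n} \<times> {1..n} \<and> partial_order_on {1..n} r"

definition strict_lt :: "nat rel \<Rightarrow> nat \<Rightarrow> nat \<Rightarrow> bool" where
  "strict_lt r i j \<longleftrightarrow> (i, j) \<in> r \<and> i \<noteq> j"

definition Aweak :: "nat \<Rightarrow> nat rel \<Rightarrow> (nat \<Rightarrow>\<^sub>0 nat) set" where
  "Aweak n r = {f. Poly_Mapping.keys f \<subseteq> {1..n} \<and>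
      (\<forall>i j. strict_lt r i j \<longrightarrow> Poly_Mapping.lookup f j \<le> Poly_Mapping.lookup f i)}"

definition RP :: "nat \<Rightarrow> nat rel \<Rightarrow> (nat, 'k::field) mpoly set" where
  "RP n r = kspan (monom ` Aweak n r)"

definition mideal :: "nat \<Rightarrow> nat rel \<Rightarrow> (nat, 'k::field) mpoly set" where
  "mideal n r = kspan (monom ` (Aweak n r - {0}))"

fun mpow :: "nat \<Rightarrow> nat rel \<Rightarrow> nat \<Rightarrow> (nat, 'k::field) mpoly set" where
  "mpow n r 0 = RP n r"
| "mpow n r (Suc i) = kspan {a * b | a b. a \<in> mideal n r \<and> b \<in> mpow n r i}"

definition compR :: "(nat, 'k::field) mpoly set \<Rightarrow> (nat \<Rightarrow>\<^sub>0 nat) \<Rightarrow> (nat, 'k) mpoly set" where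
  "compR V f = {p \<in> V. Poly_Mapping.keys p \<subseteq> {f}}"

definition hilb_RP :: "'k::field itself \<Rightarrow> nat \<Rightarrow> nat rel \<Rightarrow> (nat \<Rightarrow>\<^sub>0 nat) \<Rightarrow> nat" where
  "hilb_RP _ n r f = kdim (compR (RP n r :: (nat, 'k) mpoly set) f)"

(* Hilbert function of gr(R_P) = \<Oplus>_i m^i/m^{i+1}; the degree-f part of m^i/m^{i+1} is
   (m^i)_f/(m^{i+1})_f, whose dimension is dim (m^i)_f - dim (m^{i+1})_f *)
definition hilb_gr :: "'k::field itself \<Rightarrow> nat \<Rightarrow> nat rel \<Rightarrow> (nat \<Rightarrow>\<^sub>0 nat) \<Rightarrow> nat" where
  "hilb_gr _ n r f = Sum_any (\<lambda>i. kdim (compR (mpow n r i :: (nat, 'k) mpoly set) f)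
                           - kdim (compR (mpow n r (Suc i) :: (nat, 'k) mpoly set) f))"

definition down_closed :: "nat rel \<Rightarrow> nat set \<Rightarrow> bool" where
  "down_closed r J \<longleftrightarrow> (\<forall>i j. j \<in> J \<and> (i, j) \<in> r \<longrightarrow> i \<in> J)"

definition cover_in :: "nat rel \<Rightarrow> nat set \<Rightarrow> nat \<Rightarrow> nat \<Rightarrow> bool" where
  "cover_in r J i j \<longleftrightarrow> i \<in> J \<and> j \<in> J \<and> strict_lt r i j \<and>
      \<not> (\<exists>k\<in>J. strict_lt r i k \<and> strict_lt r k j)"

definition hasse_connected :: "nat rel \<Rightarrow> nat set \<Rightarrow> bool" where
  "hasse_connected r J \<longleftrightarrow>
     (\<forall>a\<in>J. \<forall>b\<in>J. (a, b) \<in> {(i, j). cover_in r J i j \<or> cover_in r J j i}\<^sup>*)"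

definition Jconn :: "nat \<Rightarrow> nat rel \<Rightarrow> nat set set" where
  "Jconn n r = {J. J \<subseteq> {1..n} \<and> J \<noteq> {} \<and> down_closed r J \<and> hasse_connected r J}"

definition Pi_pairs :: "nat \<Rightarrow> nat rel \<Rightarrow> nat set set set" where
  "Pi_pairs n r = {{J1, J2} | J1 J2. J1 \<in> Jconn n r \<and> J2 \<in> Jconn n r \<and>
      J1 \<inter> J2 \<noteq> {} \<and> \<not> J1 \<subseteq> J2 \<and> \<not> J2 \<subseteq> J1}"

definition Sring :: "nat \<Rightarrow> nat rel \<Rightarrow> (nat set, 'k::field) mpoly set" where
  "Sring n r = {p. \<forall>a\<in>Poly_Mapping.keys p. Poly_Mapping.keys a \<subseteq> Jconn n r}"

definition Uvar :: "nat set \<Rightarrow> (nat set, 'k::field) mpoly" where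
  "Uvar J = monom (Poly_Mapping.single J 1)"

definition Iinit :: "nat \<Rightarrow> nat rel \<Rightarrow> (nat set, 'k::field) mpoly set" where
  "Iinit n r = kspan {s * (Uvar J1 * Uvar J2) | s J1 J2.
      s \<in> Sring n r \<and> {J1, J2} \<in> Pi_pairs n r}"

(* N^n-degree of a monomial \<Prod> U_J^{a_J}: \<Sum>_J a_J \<chi>_J *)
definition Sdeg :: "(nat set \<Rightarrow>\<^sub>0 nat) \<Rightarrow> (nat \<Rightarrow>\<^sub>0 nat)" where
  "Sdeg a = (\<Sum>J\<in>Poly_Mapping.keys a. \<Sum>i\<in>J. Poly_Mapping.single i (Poly_Mapping.lookup a J))"

definition compS :: "(nat set, 'k::field) mpoly set \<Rightarrow> (nat \<Rightarrow>\<^sub>0 nat) \<Rightarrow> (nat set, 'k) mpoly set" where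
  "compS V f = {p \<in> V. \<forall>a\<in>Poly_Mapping.keys p. Sdeg a = f}"

definition hilb_SI :: "'k::field itself \<Rightarrow> nat \<Rightarrow> nat rel \<Rightarrow> (nat \<Rightarrow>\<^sub>0 nat) \<Rightarrow> nat" where
  "hilb_SI _ n r f = kdim (compS (Sring n r :: (nat set, 'k) mpoly set) f)
                     - kdim (compS (Iinit n r :: (nat set, 'k) mpoly set) f)"

end

theory Submission
  imports Defs
begin


lemma lookup_psmult[simp]: "Poly_Mapping.lookup (psmult c p) k = c * Poly_Mapping.lookup p k"
  by (simp add: psmult_def map.rep_eq when_def)

lemma lookup_monom: "Poly_Mapping.lookup (monom g :: ('v,'k::field) mpoly) k = (if g = k then 1 else 0)"
  by (simp add: monom_def lookup_single when_def)

lemma keys_monom[simp]: "Poly_Mapping.keys (monom g :: ('v,'k::field) mpoly) = {g}"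
  by (simp add: monom_def)

lemma vs_psmult: "vector_space (psmult :: 'k::field \<Rightarrow> ('v,'k) mpoly \<Rightarrow> _)"
  by unfold_locales (auto intro!: poly_mapping_eqI simp: lookup_add algebra_simps)

interpretation pm: vector_space "psmult :: 'k::field \<Rightarrow> ('v,'k) mpoly \<Rightarrow> _"
  by (rule vs_psmult)

lemma kspan_eq: "kspan = pm.span" by (simp add: kspan_def fun_eq_iff)
lemma kdim_eq: "kdim = pm.dim" by (simp add: kdim_def fun_eq_iff)

definition KP :: "(('v \<Rightarrow>\<^sub>0 nat) \<Rightarrow> bool) \<Rightarrow> ('v,'k::field) mpoly set" where
  "KP P = {p. \<forall>g\<in>Poly_Mapping.keys p. P g}"

lemma subspace_KP: "pm.subspace (KP P :: ('v,'k::field) mpoly set)"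
  unfolding pm.subspace_def KP_def
proof (intro conjI ballI allI; clarsimp)
  fix x y :: "('v,'k::field) mpoly" and g
  assume "\<forall>g\<in>Poly_Mapping.keys x. P g" "\<forall>g\<in>Poly_Mapping.keys y. P g" "g \<in> Poly_Mapping.keys (x + y)"
  thus "P g" using keys_add[of x y] by blast
next
  fix c x g assume "\<forall>g\<in>Poly_Mapping.keys x. P g" "g \<in> Poly_Mapping.keys (psmult c (x::('v,'k::field) mpoly))"
  thus "P g" by (auto simp: in_keys_iff)
qed

lemma KP_mono: "(\<And>g. P g \<Longrightarrow> Q g) \<Longrightarrow> KP P \<subseteq> KP Q"
  by (auto simp: KP_def)

lemma sum_delta_mult: "finite A \<Longrightarrow> (\<Sum>x\<in>A. f x * (if x = k then 1 else (0::'a::semiring_1))) = (if k \<in> A then f k else 0)"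
proof -
  assume "finite A"
  have "(\<Sum>x\<in>A. f x * (if x = k then 1 else (0::'a))) = (\<Sum>x\<in>A. if x = k then f x else 0)"
    by (rule sum.cong) auto
  thus ?thesis using \<open>finite A\<close> by (simp add: sum.delta')
qed

lemma poly_expand: "p = (\<Sum>g\<in>Poly_Mapping.keys p. psmult (Poly_Mapping.lookup p g) (monom g))"
  by (rule poly_mapping_eqI) (auto simp: lookup_sum lookup_monom sum_delta_mult in_keys_iff)

lemma span_monom: "pm.span (monom ` {g. P g}) = (KP P :: ('v,'k::field) mpoly set)"
proof
  show "pm.span (monom ` {g. P g}) \<subseteq> KP P"
    by (rule pm.span_minimal[OF _ subspace_KP]) (auto simp: KP_def)
next
  show "KP P \<subseteq> pm.span (monom ` {g. P g})"
  proof
    fix p assume "p \<in> KP P"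
    hence "psmult (Poly_Mapping.lookup p g) (monom g) \<in> pm.span (monom ` {g. P g})" if "g \<in> Poly_Mapping.keys p" for g
      using that by (intro pm.span_scale pm.span_base) (auto simp: KP_def)
    hence "(\<Sum>g\<in>Poly_Mapping.keys p. psmult (Poly_Mapping.lookup p g) (monom g)) \<in> pm.span (monom ` {g. P g})"
      by (intro pm.span_sum)
    thus "p \<in> pm.span (monom ` {g. P g})" using poly_expand[of p] by simp
  qed
qed

lemma indep_monom: "pm.independent (monom ` X :: ('v,'k::field) mpoly set)"
  unfolding pm.independent_explicit_module
proof (intro allI impI)
  fix t u v assume t: "finite t" "t \<subseteq> monom ` X" and s: "(\<Sum>v\<in>t. psmult (u v) v) = (0::('v,'k) mpoly)" and v: "v \<in> t"
  then obtain g where g: "v = monom g" by auto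
  have z: "(\<Sum>w\<in>t-{v}. u w * Poly_Mapping.lookup w g) = 0"
  proof (rule sum.neutral, rule ballI)
    fix w assume "w \<in> t - {v}"
    with t g obtain h where "w = monom h" "h \<noteq> g" by auto
    thus "u w * Poly_Mapping.lookup w g = 0" by (simp add: lookup_monom)
  qed
  have "0 = Poly_Mapping.lookup (\<Sum>v\<in>t. psmult (u v) v) g" using s by simp
  also have "\<dots> = (\<Sum>w\<in>t. u w * Poly_Mapping.lookup w g)" by (simp add: lookup_sum)
  also have "\<dots> = u v * Poly_Mapping.lookup v g + (\<Sum>w\<in>t-{v}. u w * Poly_Mapping.lookup w g)"
    by (rule sum.remove[OF t(1) v])
  also have "\<dots> = u v" using g z by (simp add: lookup_monom)
  finally show "u v = 0" by simp
qed

lemma inj_monom: "inj (monom :: _ \<Rightarrow> ('v,'k::field) mpoly)"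
  by (rule injI) (metis keys_monom singleton_inject)

lemma dim_KP: assumes "finite {g. P g}" shows "pm.dim (KP P :: ('v,'k::field) mpoly set) = card {g. P g}"
proof -
  have "pm.dim (KP P :: ('v,'k) mpoly set) = card (monom ` {g. P g} :: ('v,'k) mpoly set)"
    using span_monom[of P] pm.dim_span_eq_card_independent[OF indep_monom] by metis
  also have "\<dots> = card {g. P g}" by (rule card_image) (metis inj_monom inj_on_subset subset_UNIV)
  finally show ?thesis .
qed


lemma compR_KP: "compR (KP P) f = KP (\<lambda>g. P g \<and> g = f)"
  by (auto simp: compR_def KP_def)

lemma compR_inter: "compR V f = V \<inter> KP (\<lambda>g. g = f)"
  by (auto simp: compR_def KP_def)

lemma dim_sub1:
  assumes "pm.subspace W" "W \<subseteq> (KP (\<lambda>g. g = f) :: ('v,'k::field) mpoly set)"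
  shows "pm.dim W = (if monom f \<in> W then 1 else 0)"
proof (cases "monom f \<in> W")
  case True
  have "W = KP (\<lambda>g. g = f)"
  proof
    show "KP (\<lambda>g. g = f) \<subseteq> W"
    proof
      fix p :: "('v,'k) mpoly" assume "p \<in> KP (\<lambda>g. g = f)"
      hence "p = psmult (Poly_Mapping.lookup p f) (monom f)"
        by (intro poly_mapping_eqI) (auto simp: KP_def lookup_monom in_keys_iff)
      moreover have "psmult (Poly_Mapping.lookup p f) (monom f) \<in> W"
        using assms(1) True by (simp add: pm.subspace_def)
      ultimately show "p \<in> W" by simp
    qed
  qed (use assms in auto)
  moreover have "pm.dim (KP (\<lambda>g. g = f) :: ('v,'k) mpoly set) = 1" using dim_KP[of "\<lambda>g. g = f"] by simp
  ultimately show ?thesis using True by simp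
next
  case False
  have "W \<subseteq> KP (\<lambda>g. False)"
  proof
    fix p :: "('v,'k) mpoly" assume p: "p \<in> W"
    have pk: "Poly_Mapping.keys p \<subseteq> {f}" using p assms(2) by (auto simp: KP_def)
    have "p = psmult (Poly_Mapping.lookup p f) (monom f)"
      using pk by (intro poly_mapping_eqI) (auto simp: lookup_monom in_keys_iff)
    moreover have "Poly_Mapping.lookup p f = 0"
    proof (rule ccontr)
      assume "Poly_Mapping.lookup p f \<noteq> 0"
      hence "psmult (inverse (Poly_Mapping.lookup p f)) p = monom f"
        using pk by (intro poly_mapping_eqI) (auto simp: lookup_monom in_keys_iff)
      moreover have "psmult (inverse (Poly_Mapping.lookup p f)) p \<in> W"
        using assms(1) p by (simp add: pm.subspace_def)
      ultimately show False using False by simp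
    qed
    ultimately have "p = 0" by (metis lookup_psmult mult_zero_left poly_mapping_eqI lookup_zero)
    thus "p \<in> KP (\<lambda>g. False)" by (simp add: KP_def)
  qed
  moreover have "KP (\<lambda>g. False) = {0::('v,'k) mpoly}" by (auto simp: KP_def)
  ultimately have "W = {0}" using assms(1) by (auto simp: pm.subspace_def)
  hence "pm.dim W = 0" using dim_KP[of "\<lambda>g. False"] \<open>KP (\<lambda>g. False) = {0}\<close> by (metis Collect_empty_eq card.empty finite.emptyI)
  thus ?thesis using False by simp
qed

lemma Aweak_add: "f \<in> Aweak n r \<Longrightarrow> g \<in> Aweak n r \<Longrightarrow> f + g \<in> Aweak n r"
  unfolding Aweak_def using keys_add[of f g] by (auto simp: lookup_add add_mono)

lemma RP_eq: "RP n r = KP (\<lambda>g. g \<in> Aweak n r)"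
  unfolding RP_def kspan_eq using span_monom[of "\<lambda>g. g \<in> Aweak n r"] by simp

lemma mideal_eq: "mideal n r = KP (\<lambda>g. g \<in> Aweak n r \<and> g \<noteq> 0)"
proof -
  have "Aweak n r - {0} = {g. g \<in> Aweak n r \<and> g \<noteq> 0}" by auto
  thus ?thesis unfolding mideal_def kspan_eq using span_monom[of "\<lambda>g. g \<in> Aweak n r \<and> g \<noteq> 0"] by simp
qed

lemma keys_mult_KP:
  assumes "a \<in> KP P" "b \<in> KP Q" "\<And>x y. P x \<Longrightarrow> Q y \<Longrightarrow> R (x + y)"
  shows "a * b \<in> KP R"
  using keys_mult[of a b] assms by (fastforce simp: KP_def)

lemma subspace_mpow: "pm.subspace (mpow n r i)"
  by (cases i) (auto simp: RP_def kspan_eq)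

lemma mpow_mono: "(mpow n r (Suc i) :: (nat,'k::field) mpoly set) \<subseteq> mpow n r i"
proof (induction i)
  case 0
  show ?case
    unfolding mpow.simps kspan_eq
  proof (rule pm.span_minimal)
    show "pm.subspace (RP n r)" by (simp add: RP_def kspan_eq)
    show "{a * b |a b. a \<in> mideal n r \<and> b \<in> RP n r} \<subseteq> RP n r"
      unfolding RP_eq mideal_eq by (auto intro!: keys_mult_KP Aweak_add)
  qed
next
  case (Suc i)
  have "(mpow n r (Suc (Suc i)) :: (nat,'k) mpoly set) = pm.span {a * b |a b. a \<in> mideal n r \<and> b \<in> mpow n r (Suc i)}"
    by (simp only: mpow.simps(2)[of n r "Suc i"] kspan_eq)
  also have "\<dots> \<subseteq> pm.span {a * b |a b. a \<in> mideal n r \<and> b \<in> mpow n r i}"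
    by (rule pm.span_mono) (use Suc.IH in fastforce)
  also have "\<dots> = mpow n r (Suc i)"
    by (simp only: mpow.simps(2)[of n r i] kspan_eq)
  finally show ?case .
qed

definition tdeg :: "('v \<Rightarrow>\<^sub>0 nat) \<Rightarrow> nat" where "tdeg g = sum (Poly_Mapping.lookup g) (Poly_Mapping.keys g)"

lemma tdeg_super: "finite K \<Longrightarrow> Poly_Mapping.keys g \<subseteq> K \<Longrightarrow> tdeg g = sum (Poly_Mapping.lookup g) K"
  unfolding tdeg_def by (rule sum.mono_neutral_left) (auto simp: in_keys_iff)

lemma tdeg_add: "tdeg (g + h) = tdeg g + tdeg h"
proof -
  let ?K = "Poly_Mapping.keys g \<union> Poly_Mapping.keys h"
  have "tdeg (g + h) = sum (Poly_Mapping.lookup (g+h)) ?K" using keys_add[of g h] by (intro tdeg_super) auto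
  also have "\<dots> = sum (Poly_Mapping.lookup g) ?K + sum (Poly_Mapping.lookup h) ?K" by (simp add: lookup_add sum.distrib)
  also have "\<dots> = tdeg g + tdeg h" using tdeg_super[of ?K g] tdeg_super[of ?K h] by simp
  finally show ?thesis .
qed

lemma tdeg_pos: "g \<noteq> 0 \<Longrightarrow> 1 \<le> tdeg g"
proof -
  assume "g \<noteq> 0"
  then obtain x where x: "x \<in> Poly_Mapping.keys g" by (metis keys_eq_empty ex_in_conv)
  hence "Poly_Mapping.lookup g x \<le> tdeg g" unfolding tdeg_def by (intro member_le_sum) auto
  moreover have "Poly_Mapping.lookup g x \<ge> 1" using x by (simp add: in_keys_iff)
  ultimately show ?thesis by simp
qed

lemma mpow_deg: "(mpow n r i :: (nat,'k::field) mpoly set) \<subseteq> KP (\<lambda>g. i \<le> tdeg g)"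
proof (induction i)
  case 0 show ?case by (auto simp: KP_def)
next
  case (Suc i)
  show ?case
    unfolding mpow.simps kspan_eq
  proof (rule pm.span_minimal[OF _ subspace_KP], safe)
    fix a b :: "(nat,'k) mpoly" assume "a \<in> mideal n r" "b \<in> mpow n r i"
    hence a: "a \<in> KP (\<lambda>g. 1 \<le> tdeg g)" and b: "b \<in> KP (\<lambda>g. i \<le> tdeg g)"
      using Suc tdeg_pos unfolding mideal_eq by (fastforce simp: KP_def)+
    show "a * b \<in> KP (\<lambda>g. Suc i \<le> tdeg g)"
      by (rule keys_mult_KP[OF a b]) (simp add: tdeg_add)
  qed
qed

lemma telescope:
  fixes d :: "nat \<Rightarrow> nat"
  assumes mono: "\<And>i. d (Suc i) \<le> d i" and z: "d N = 0"
  shows "Sum_any (\<lambda>i. d i - d (Suc i)) = d 0"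
proof -
  have le: "d j \<le> d i" if "i \<le> j" for i j
    using that by (induction j) (auto simp: le_Suc_eq intro: order_trans[OF mono])
  have "d i = 0" if "N \<le> i" for i using le[OF that] z by simp
  hence sup: "{i. d i - d (Suc i) \<noteq> 0} \<subseteq> {..<N}"
    by (metis (mono_tags, lifting) diff_is_0_eq' le0 lessThan_iff mem_Collect_eq not_le subsetI)
  have "sum (\<lambda>i. d i - d (Suc i)) {..<M} = d 0 - d M" for M
  proof (induction M)
    case (Suc M)
    have "d (Suc M) \<le> d M" "d M \<le> d 0" using mono le[of 0 M] by auto
    thus ?case using Suc.IH by simp
  qed simp
  thus ?thesis using Sum_any.expand_superset[OF _ sup] z by simp
qed


lemma hilb_RP_eq: "hilb_RP TYPE('k::field) n r f = (if f \<in> Aweak n r then 1 else 0)"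
proof -
  have "hilb_RP TYPE('k) n r f = pm.dim (KP (\<lambda>g. g \<in> Aweak n r \<and> g = f) :: (nat,'k) mpoly set)"
    unfolding hilb_RP_def kdim_eq RP_eq compR_KP ..
  also have "\<dots> = card {g. g \<in> Aweak n r \<and> g = f}"
    by (rule dim_KP) (rule finite_subset[of _ "{f}"], auto)
  also have "\<dots> = (if f \<in> Aweak n r then 1 else 0)"
  proof (cases "f \<in> Aweak n r")
    case True hence "{g. g \<in> Aweak n r \<and> g = f} = {f}" by auto
    thus ?thesis using True by simp
  next
    case False hence "{g. g \<in> Aweak n r \<and> g = f} = {}" by auto
    thus ?thesis using False by simp
  qed
  finally show ?thesis .
qed

lemma hilb_gr_eq: "hilb_gr TYPE('k::field) n r f = (if f \<in> Aweak n r then 1 else 0)"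
proof -
  define d where "d i = kdim (compR (mpow n r i :: (nat,'k) mpoly set) f)" for i
  have d: "d i = (if (monom f :: (nat,'k) mpoly) \<in> mpow n r i then 1 else 0)" for i
  proof -
    have "d i = pm.dim ((mpow n r i :: (nat,'k) mpoly set) \<inter> KP (\<lambda>g. g = f))"
      unfolding d_def kdim_eq compR_inter ..
    also have "\<dots> = (if (monom f :: (nat,'k) mpoly) \<in> mpow n r i \<inter> KP (\<lambda>g. g = f) then 1 else 0)"
      by (rule dim_sub1) (auto intro: pm.subspace_inter subspace_mpow subspace_KP)
    also have "\<dots> = (if (monom f :: (nat,'k) mpoly) \<in> mpow n r i then 1 else 0)"
      by (simp add: KP_def)
    finally show ?thesis .
  qed
  have mono: "d (Suc i) \<le> d i" for i using mpow_mono[of n r i] unfolding d by auto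
  have z: "d (Suc (tdeg f)) = 0" using mpow_deg[of n r "Suc (tdeg f)"] unfolding d by (auto simp: KP_def)
  have "hilb_gr TYPE('k) n r f = Sum_any (\<lambda>i. d i - d (Suc i))"
    unfolding hilb_gr_def d_def ..
  also have "\<dots> = d 0" by (rule telescope[of d, OF mono z])
  also have "\<dots> = (if f \<in> Aweak n r then 1 else 0)" unfolding d by (simp add: RP_eq KP_def)
  finally show ?thesis .
qed


definition lam :: "nat set set \<Rightarrow> bool" where
  "lam K \<longleftrightarrow> (\<forall>J1\<in>K. \<forall>J2\<in>K. J1 \<inter> J2 = {} \<or> J1 \<subseteq> J2 \<or> J2 \<subseteq> J1)"

definition chi :: "nat set \<Rightarrow> nat \<Rightarrow>\<^sub>0 nat" where
  "chi C = (\<Sum>i\<in>C. Poly_Mapping.single i 1)"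

lemma lookup_chi: "finite C \<Longrightarrow> Poly_Mapping.lookup (chi C) x = (if x \<in> C then 1 else 0)"
  by (simp add: chi_def lookup_sum lookup_single when_def)

lemma sum_when_delta: "finite J \<Longrightarrow> (\<Sum>i\<in>J. (c when i = x)) = (if x \<in> J then c else (0::'a::comm_monoid_add))"
  by (simp add: when_def sum.delta')

lemma tdeg_single: "tdeg (Poly_Mapping.single J (1::nat)) = 1"
  by (simp add: tdeg_def)

locale poset =
  fixes n :: nat and r :: "nat rel"
  assumes P: "poset_on n r"
begin

lemma r_sub: "r \<subseteq> {1..n} \<times> {1..n}" using P by (simp add: poset_on_def)
lemma r_trans: "trans r" using P by (auto simp: poset_on_def partial_order_on_def preorder_on_def)
lemma r_antisym: "antisym r" using P by (auto simp: poset_on_def partial_order_on_def)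

lemma finite_Jc: "finite (Jconn n r)"
  by (rule finite_subset[of _ "Pow {1..n}"]) (auto simp: Jconn_def)

lemma Jc_finite: "J \<in> Jconn n r \<Longrightarrow> finite J"
  by (auto simp: Jconn_def intro: finite_subset)

definition cs :: "(nat set \<Rightarrow>\<^sub>0 nat) \<Rightarrow> nat \<Rightarrow> nat" where
  "cs g x = (\<Sum>J\<in>Jconn n r. if x \<in> J then Poly_Mapping.lookup g J else 0)"

lemma SD: assumes "Poly_Mapping.keys g \<subseteq> Jconn n r"
  shows "Poly_Mapping.lookup (Sdeg g) x = cs g x"
proof -
  have "Poly_Mapping.lookup (Sdeg g) x = (\<Sum>J\<in>Poly_Mapping.keys g. \<Sum>i\<in>J. (Poly_Mapping.lookup g J when i = x))"
    by (simp add: Sdeg_def lookup_sum lookup_single)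
  also have "\<dots> = (\<Sum>J\<in>Poly_Mapping.keys g. if x \<in> J then Poly_Mapping.lookup g J else 0)"
    by (rule sum.cong[OF refl]) (use assms Jc_finite in \<open>auto simp: sum_when_delta\<close>)
  also have "\<dots> = cs g x" unfolding cs_def
    by (rule sum.mono_neutral_left) (use assms finite_Jc in \<open>auto simp: in_keys_iff\<close>)
  finally show ?thesis .
qed

lemma Sdeg_eq: "Poly_Mapping.keys g \<subseteq> Jconn n r \<Longrightarrow> Sdeg g = f \<longleftrightarrow> (\<forall>x. cs g x = Poly_Mapping.lookup f x)"
  by (auto simp: poly_mapping_eq_iff SD fun_eq_iff)

lemma cs_add: "cs (g + h) x = cs g x + cs h x"
  unfolding cs_def sum.distrib[symmetric] by (rule sum.cong) (auto simp: lookup_add)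

lemma cs_single: "C \<in> Jconn n r \<Longrightarrow> cs (Poly_Mapping.single C 1) x = (if x \<in> C then 1 else 0)"
proof -
  assume C: "C \<in> Jconn n r"
  have "cs (Poly_Mapping.single C 1) x = (\<Sum>J\<in>Jconn n r. if J = C then (if x \<in> C then 1 else 0) else 0)"
    unfolding cs_def by (rule sum.cong) (auto simp: lookup_single when_def)
  thus ?thesis using C finite_Jc by (simp add: sum.delta')
qed

lemma cs_pos: assumes "Poly_Mapping.keys g \<subseteq> Jconn n r"
  shows "0 < cs g x \<longleftrightarrow> (\<exists>J\<in>Poly_Mapping.keys g. x \<in> J)"
proof
  assume pos: "0 < cs g x"
  have "\<exists>J\<in>Jconn n r. (if x \<in> J then Poly_Mapping.lookup g J else 0) \<noteq> 0"
  proof (rule ccontr)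
    assume "\<not> ?thesis"
    hence "cs g x = 0" unfolding cs_def by (intro sum.neutral) auto
    with pos show False by simp
  qed
  then obtain J where "J \<in> Jconn n r" "(if x \<in> J then Poly_Mapping.lookup g J else 0) \<noteq> 0" by blast
  thus "\<exists>J\<in>Poly_Mapping.keys g. x \<in> J" by (auto simp: in_keys_iff split: if_splits)
next
  assume "\<exists>J\<in>Poly_Mapping.keys g. x \<in> J"
  then obtain J where J: "J \<in> Poly_Mapping.keys g" "x \<in> J" by blast
  have "(if x \<in> J then Poly_Mapping.lookup g J else 0) \<le> cs g x"
    unfolding cs_def by (rule member_le_sum) (use J assms finite_Jc in auto)
  thus "0 < cs g x" using J by (auto simp: in_keys_iff)
qed

lemma cs_mono: assumes "Poly_Mapping.keys g \<subseteq> Jconn n r" "(i, j) \<in> r"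
  shows "cs g j \<le> cs g i"
  unfolding cs_def
proof (rule sum_mono)
  fix J assume "J \<in> Jconn n r"
  hence "down_closed r J" by (simp add: Jconn_def)
  thus "(if j \<in> J then Poly_Mapping.lookup g J else 0) \<le> (if i \<in> J then Poly_Mapping.lookup g J else 0)"
    using assms(2) by (auto simp: down_closed_def)
qed

lemma conn_closed:
  assumes hc: "hasse_connected r J" and x: "x \<in> J" "x \<in> W" and JU: "J \<subseteq> U"
    and cl: "\<And>u v. u \<in> W \<Longrightarrow> v \<in> U \<Longrightarrow> (u, v) \<in> r \<or> (v, u) \<in> r \<Longrightarrow> v \<in> W"
  shows "J \<subseteq> W"
proof
  fix y assume y: "y \<in> J"
  have "(x, y) \<in> {(i, j). cover_in r J i j \<or> cover_in r J j i}\<^sup>*"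
    using hc x y by (auto simp: hasse_connected_def)
  thus "y \<in> W"
  proof (induction rule: rtrancl_induct)
    case base show ?case by (rule x(2))
  next
    case (step y z)
    hence "z \<in> J" "(y, z) \<in> r \<or> (z, y) \<in> r" by (auto simp: cover_in_def strict_lt_def)
    thus ?case using step JU cl by blast
  qed
qed

lemma cover_chain:
  assumes fin: "finite C"
  shows "i \<in> C \<Longrightarrow> j \<in> C \<Longrightarrow> (i, j) \<in> r \<Longrightarrow> (i, j) \<in> {(a, b). cover_in r C a b \<or> cover_in r C b a}\<^sup>*"
proof (induction "card {k\<in>C. strict_lt r i k \<and> strict_lt r k j}" arbitrary: i j rule: less_induct)
  case less
  let ?E = "{(a, b). cover_in r C a b \<or> cover_in r C b a}"
  show ?case
  proof (cases "i = j")
    case True thus ?thesis by simp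
  next
    case False
    show ?thesis
    proof (cases "\<exists>k\<in>C. strict_lt r i k \<and> strict_lt r k j")
      case False
      hence "cover_in r C i j" using less.prems \<open>i \<noteq> j\<close> by (auto simp: cover_in_def strict_lt_def)
      thus ?thesis by auto
    next
      case True
      then obtain k where k: "k \<in> C" "strict_lt r i k" "strict_lt r k j" by blast
      have tr: "(a, c) \<in> r" if "(a, b) \<in> r" "(b, c) \<in> r" for a b c
        using r_trans that by (meson transD)
      have as: "a = b" if "(a, b) \<in> r" "(b, a) \<in> r" for a b
        using r_antisym that by (meson antisymD)
      have s1: "{k'\<in>C. strict_lt r i k' \<and> strict_lt r k' k} \<subset> {k'\<in>C. strict_lt r i k' \<and> strict_lt r k' j}"
      proof
        show "{k'\<in>C. strict_lt r i k' \<and> strict_lt r k' k} \<subseteq> {k'\<in>C. strict_lt r i k' \<and> strict_lt r k' j}"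
          using k tr as unfolding strict_lt_def by blast
        show "{k'\<in>C. strict_lt r i k' \<and> strict_lt r k' k} \<noteq> {k'\<in>C. strict_lt r i k' \<and> strict_lt r k' j}"
          using k unfolding strict_lt_def by blast
      qed
      have s2: "{k'\<in>C. strict_lt r k k' \<and> strict_lt r k' j} \<subset> {k'\<in>C. strict_lt r i k' \<and> strict_lt r k' j}"
      proof
        show "{k'\<in>C. strict_lt r k k' \<and> strict_lt r k' j} \<subseteq> {k'\<in>C. strict_lt r i k' \<and> strict_lt r k' j}"
          using k tr as unfolding strict_lt_def by blast
        show "{k'\<in>C. strict_lt r k k' \<and> strict_lt r k' j} \<noteq> {k'\<in>C. strict_lt r i k' \<and> strict_lt r k' j}"
          using k unfolding strict_lt_def by blast
      qed
      have "(i, k) \<in> ?E\<^sup>*"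
        by (rule less.hyps[OF psubset_card_mono[OF _ s1]]) (use fin less.prems k in \<open>auto simp: strict_lt_def\<close>)
      moreover have "(k, j) \<in> ?E\<^sup>*"
        by (rule less.hyps[OF psubset_card_mono[OF _ s2]]) (use fin less.prems k in \<open>auto simp: strict_lt_def\<close>)
      ultimately show ?thesis by (rule rtrancl_trans)
    qed
  qed
qed

end



context poset begin

lemma existence:
  "f \<in> Aweak n r \<Longrightarrow> \<exists>g. Poly_Mapping.keys g \<subseteq> Jconn n r \<and> lam (Poly_Mapping.keys g) \<and> (\<forall>x. cs g x = Poly_Mapping.lookup f x)"
proof (induction "tdeg f" arbitrary: f rule: less_induct)
  case less
  show ?case
  proof (cases "f = 0")
    case True
    thus ?thesis by (intro exI[of _ 0]) (auto simp: lam_def cs_def cong: if_cong)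
  next
    case False
    define U where "U = Poly_Mapping.keys f"
    have "U \<noteq> {}" using False unfolding U_def by simp
    then obtain x where x: "x \<in> U" by blast
    define EU where "EU = {(a,b). a \<in> U \<and> b \<in> U \<and> ((a,b) \<in> r \<or> (b,a) \<in> r)}"
    define C where "C = {y. (x,y) \<in> EU\<^sup>*}"
    have Un: "U \<subseteq> {1..n}" using less.prems by (auto simp: Aweak_def U_def)
    have xC: "x \<in> C" by (simp add: C_def)
    have CU: "C \<subseteq> U"
    proof
      fix y assume "y \<in> C" hence "(x,y) \<in> EU\<^sup>*" by (simp add: C_def)
      thus "y \<in> U" by (induction rule: rtrancl_induct) (use x in \<open>auto simp: EU_def\<close>)
    qed
    have clC: "v \<in> C" if "u \<in> C" "v \<in> U" "(u,v) \<in> r \<or> (v,u) \<in> r" for u v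
    proof -
      have "(u,v) \<in> EU" using that CU by (auto simp: EU_def)
      moreover have "(x,u) \<in> EU\<^sup>*" using that(1) by (simp add: C_def)
      ultimately show ?thesis unfolding C_def by (metis mem_Collect_eq rtrancl.rtrancl_into_rtrancl)
    qed
    have Udown: "z \<in> U" if "y \<in> U" "(z,y) \<in> r" for y z
    proof (cases "z = y")
      case False
      hence "strict_lt r z y" using that by (simp add: strict_lt_def)
      hence "Poly_Mapping.lookup f y \<le> Poly_Mapping.lookup f z" using less.prems by (auto simp: Aweak_def)
      thus ?thesis using that by (auto simp: U_def in_keys_iff)
    qed (use that in simp)
    have Cdown: "down_closed r C" unfolding down_closed_def using clC CU Udown by blast
    have finC: "finite C" using CU Un by (meson finite_atLeastAtMost finite_subset subset_trans)
    have Chc: "hasse_connected r C"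
    proof -
      let ?E = "{(i, j). cover_in r C i j \<or> cover_in r C j i}"
      have symE: "sym (?E\<^sup>*)" by (intro sym_rtrancl) (auto simp: sym_def)
      have xa: "(x,a) \<in> ?E\<^sup>*" if "a \<in> C" for a
      proof -
        have "(x,a) \<in> EU\<^sup>*" using that by (simp add: C_def)
        thus ?thesis
        proof (induction rule: rtrancl_induct)
          case (step y z)
          have yC: "y \<in> C" using step.hyps(1) by (simp add: C_def)
          have zC: "z \<in> C" using step.hyps unfolding C_def by (simp add: rtrancl.rtrancl_into_rtrancl)
          from step.hyps(2) have "(y,z) \<in> r \<or> (z,y) \<in> r" by (simp add: EU_def)
          hence "(y,z) \<in> ?E\<^sup>*"
          proof
            assume "(y,z) \<in> r" thus ?thesis using cover_chain[OF finC yC zC] by simp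
          next
            assume "(z,y) \<in> r" hence "(z,y) \<in> ?E\<^sup>*" using cover_chain[OF finC zC yC] by simp
            thus ?thesis using symE by (meson symD)
          qed
          with step.IH show ?case by (rule rtrancl_trans)
        qed simp
      qed
      show ?thesis unfolding hasse_connected_def
      proof (intro ballI)
        fix a b assume "a \<in> C" "b \<in> C"
        hence "(x,a) \<in> ?E\<^sup>*" "(x,b) \<in> ?E\<^sup>*" using xa by auto
        hence "(a,x) \<in> ?E\<^sup>*" "(x,b) \<in> ?E\<^sup>*" using symE by (auto intro: symD)
        thus "(a,b) \<in> {(i, j). cover_in r C i j \<or> cover_in r C j i}\<^sup>*" by (rule rtrancl_trans)
      qed
    qed
    have CJ: "C \<in> Jconn n r" using CU Un xC Cdown Chc by (auto simp: Jconn_def)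
    define f' where "f' = f - chi C"
    have lf': "Poly_Mapping.lookup f' y = Poly_Mapping.lookup f y - (if y \<in> C then 1 else 0)" for y
      by (simp add: f'_def lookup_minus lookup_chi finC)
    have ff': "f = f' + chi C"
      by (rule poly_mapping_eqI) (use CU in \<open>auto simp: lookup_add lf' lookup_chi finC U_def in_keys_iff\<close>)
    have f'A: "f' \<in> Aweak n r"
      unfolding Aweak_def
    proof (intro CollectI conjI allI impI)
      show "Poly_Mapping.keys f' \<subseteq> {1..n}" using Un by (auto simp: in_keys_iff lf' U_def split: if_splits)
      fix i j assume ij: "strict_lt r i j"
      hence fij: "Poly_Mapping.lookup f j \<le> Poly_Mapping.lookup f i" using less.prems by (auto simp: Aweak_def)
      have rij: "(i,j) \<in> r" using ij by (simp add: strict_lt_def)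
      show "Poly_Mapping.lookup f' j \<le> Poly_Mapping.lookup f' i"
      proof (cases "j \<in> C")
        case True
        hence "i \<in> C" using Cdown rij by (auto simp: down_closed_def)
        thus ?thesis using True fij by (simp add: lf')
      next
        case jC: False
        show ?thesis
        proof (cases "i \<in> C")
          case True
          have "j \<notin> U" using clC[OF True _ ] rij jC by blast
          thus ?thesis using jC by (simp add: lf' U_def in_keys_iff)
        next
          case False thus ?thesis using jC fij by (simp add: lf')
        qed
      qed
    qed
    have "tdeg f' < tdeg f"
    proof -
      have "chi C \<noteq> 0" using xC finC by (metis lookup_chi lookup_zero one_neq_zero)
      hence "1 \<le> tdeg (chi C)" by (rule tdeg_pos)
      thus ?thesis using ff' tdeg_add[of f' "chi C"] by simp
    qed
    from less.hyps[OF this f'A] obtain g' where g': "Poly_Mapping.keys g' \<subseteq> Jconn n r"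
      "lam (Poly_Mapping.keys g')" "\<forall>x. cs g' x = Poly_Mapping.lookup f' x" by blast
    define g where "g = g' + Poly_Mapping.single C 1"
    have kg: "Poly_Mapping.keys g \<subseteq> Poly_Mapping.keys g' \<union> {C}"
      unfolding g_def using keys_add[of g' "Poly_Mapping.single C 1"] by simp
    have J'C: "J' \<subseteq> C" if J'k: "J' \<in> Poly_Mapping.keys g'" and J'i: "J' \<inter> C \<noteq> {}" for J'
    proof -
      obtain y where y: "y \<in> J'" "y \<in> C" using J'i by blast
      have J'U: "J' \<subseteq> U"
      proof
        fix z assume "z \<in> J'"
        hence "0 < cs g' z" using cs_pos[OF g'(1)] J'k by blast
        thus "z \<in> U" using g'(3) lf' by (auto simp: U_def in_keys_iff)
      qed
      have "hasse_connected r J'" using J'k g'(1) by (auto simp: Jconn_def)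
      from conn_closed[OF this y J'U clC] show ?thesis .
    qed
    have "Poly_Mapping.keys g \<subseteq> Jconn n r" using kg g'(1) CJ by auto
    moreover have "lam (Poly_Mapping.keys g)"
      unfolding lam_def
    proof (intro ballI)
      fix J1 J2 assume "J1 \<in> Poly_Mapping.keys g" "J2 \<in> Poly_Mapping.keys g"
      hence "J1 \<in> Poly_Mapping.keys g' \<union> {C}" "J2 \<in> Poly_Mapping.keys g' \<union> {C}" using kg by auto
      then consider "J1 \<in> Poly_Mapping.keys g'" "J2 \<in> Poly_Mapping.keys g'" | "J1 = C" "J2 \<in> Poly_Mapping.keys g'"
        | "J1 \<in> Poly_Mapping.keys g'" "J2 = C" | "J1 = C" "J2 = C" by blast
      thus "J1 \<inter> J2 = {} \<or> J1 \<subseteq> J2 \<or> J2 \<subseteq> J1"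
      proof cases
        case 1 thus ?thesis using g'(2) unfolding lam_def by simp
      next
        case 2 thus ?thesis using J'C[of J2] by (metis Int_commute)
      next
        case 3 thus ?thesis using J'C[of J1] by metis
      qed simp
    qed
    moreover have "\<forall>y. cs g y = Poly_Mapping.lookup f y"
    proof
      fix y
      have "Poly_Mapping.lookup f y = Poly_Mapping.lookup f' y + (if y \<in> C then 1 else 0)"
        by (subst ff') (simp add: lookup_add lookup_chi[OF finC])
      thus "cs g y = Poly_Mapping.lookup f y"
        using g'(3) cs_single[OF CJ, of y] by (simp add: g_def cs_add)
    qed
    ultimately show ?thesis by blast
  qed
qed

lemma lam_sub: "K' \<subseteq> K \<Longrightarrow> lam K \<Longrightarrow> lam K'"
  unfolding lam_def by blast

lemma max_closed:
  assumes K: "K \<subseteq> Jconn n r" "lam K" and J: "J \<in> K" "\<forall>J'\<in>K. J \<subseteq> J' \<longrightarrow> J = J'"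
    and u: "u \<in> J" and v: "v \<in> \<Union>K" and c: "(u,v) \<in> r \<or> (v,u) \<in> r"
  shows "v \<in> J"
proof -
  from v obtain K' where K': "K' \<in> K" "v \<in> K'" by blast
  from c show ?thesis
  proof
    assume "(v,u) \<in> r" thus ?thesis using J K u by (auto simp: Jconn_def down_closed_def)
  next
    assume "(u,v) \<in> r"
    hence "u \<in> K'" using K' K by (auto simp: Jconn_def down_closed_def)
    hence "J \<inter> K' \<noteq> {}" using u by blast
    hence "J \<subseteq> K' \<or> K' \<subseteq> J" using K(2) J(1) K'(1) unfolding lam_def by blast
    thus ?thesis using J(2) K' by blast
  qed
qed

lemma minus_single:
  assumes "J \<in> Poly_Mapping.keys (g :: nat set \<Rightarrow>\<^sub>0 nat)"
  shows "g = (g - Poly_Mapping.single J 1) + Poly_Mapping.single J 1"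
    and "Poly_Mapping.keys (g - Poly_Mapping.single J 1) \<subseteq> Poly_Mapping.keys g"
  using assms by (auto intro!: poly_mapping_eqI simp: lookup_add lookup_minus lookup_single when_def in_keys_iff)

lemma uniqueness:
  "Poly_Mapping.keys g1 \<subseteq> Jconn n r \<Longrightarrow> lam (Poly_Mapping.keys g1) \<Longrightarrow> Poly_Mapping.keys g2 \<subseteq> Jconn n r
   \<Longrightarrow> lam (Poly_Mapping.keys g2) \<Longrightarrow> (\<And>x. cs g1 x = cs g2 x) \<Longrightarrow> g1 = g2"
proof (induction "tdeg g1" arbitrary: g1 g2 rule: less_induct)
  case less
  have U: "\<Union>(Poly_Mapping.keys g1) = \<Union>(Poly_Mapping.keys g2)"
  proof (intro set_eqI)
    fix y
    have "y \<in> \<Union>(Poly_Mapping.keys g1) \<longleftrightarrow> 0 < cs g1 y" using cs_pos[OF less.prems(1), of y] by auto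
    also have "\<dots> \<longleftrightarrow> 0 < cs g2 y" using less.prems(5) by simp
    also have "\<dots> \<longleftrightarrow> y \<in> \<Union>(Poly_Mapping.keys g2)" using cs_pos[OF less.prems(3), of y] by auto
    finally show "y \<in> \<Union>(Poly_Mapping.keys g1) \<longleftrightarrow> y \<in> \<Union>(Poly_Mapping.keys g2)" .
  qed
  show ?case
  proof (cases "Poly_Mapping.keys g1 = {}")
    case True
    have "Poly_Mapping.keys g2 = {}"
    proof (rule ccontr)
      assume "Poly_Mapping.keys g2 \<noteq> {}"
      then obtain J where J: "J \<in> Poly_Mapping.keys g2" by blast
      then obtain y where "y \<in> J" using less.prems(3) by (auto simp: Jconn_def)
      hence "y \<in> \<Union>(Poly_Mapping.keys g2)" using J by blast
      thus False using U True by (metis Union_empty empty_iff)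
    qed
    thus ?thesis using True by simp
  next
    case False
    obtain J where J: "J \<in> Poly_Mapping.keys g1" "\<forall>J'\<in>Poly_Mapping.keys g1. J \<subseteq> J' \<longrightarrow> J = J'"
      using finite_has_maximal[OF finite_keys False] by blast
    obtain x where x: "x \<in> J" using J(1) less.prems(1) by (auto simp: Jconn_def)
    have "x \<in> \<Union>(Poly_Mapping.keys g2)" using U x J(1) by blast
    then obtain K0 where K0: "K0 \<in> Poly_Mapping.keys g2" "x \<in> K0" by blast
    then obtain K where K: "K \<in> Poly_Mapping.keys g2" "K0 \<subseteq> K" "\<forall>J'\<in>Poly_Mapping.keys g2. K \<subseteq> J' \<longrightarrow> K = J'"
      using finite_has_maximal2[OF finite_keys K0(1)] by blast
    have xK: "x \<in> K" using K K0 by blast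
    have clJ: "v \<in> J" if "u \<in> J" "v \<in> \<Union>(Poly_Mapping.keys g1)" "(u,v) \<in> r \<or> (v,u) \<in> r" for u v
      using max_closed[OF less.prems(1,2) J that] .
    have clK: "v \<in> K" if "u \<in> K" "v \<in> \<Union>(Poly_Mapping.keys g2)" "(u,v) \<in> r \<or> (v,u) \<in> r" for u v
      using max_closed[OF less.prems(3,4) K(1,3) that] .
    have hcK: "hasse_connected r K" using K(1) less.prems(3) by (auto simp: Jconn_def)
    have hcJ: "hasse_connected r J" using J(1) less.prems(1) by (auto simp: Jconn_def)
    have KU: "K \<subseteq> \<Union>(Poly_Mapping.keys g1)" using K(1) U by blast
    have JU: "J \<subseteq> \<Union>(Poly_Mapping.keys g2)" using J(1) U by blast
    have "K \<subseteq> J" by (rule conn_closed[OF hcK xK x KU clJ])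
    moreover have "J \<subseteq> K" by (rule conn_closed[OF hcJ x xK JU clK])
    ultimately have JK: "J \<in> Poly_Mapping.keys g2" using K(1) by simp
    define g1' where "g1' = g1 - Poly_Mapping.single J 1"
    define g2' where "g2' = g2 - Poly_Mapping.single J 1"
    note e1 = minus_single[OF J(1), folded g1'_def]
    note e2 = minus_single[OF JK, folded g2'_def]
    have JJ: "J \<in> Jconn n r" using J(1) less.prems(1) by blast
    have "tdeg g1' < tdeg g1" using e1(1) tdeg_add[of g1' "Poly_Mapping.single J 1"] tdeg_single[of J] by simp
    moreover have "Poly_Mapping.keys g1' \<subseteq> Jconn n r" "lam (Poly_Mapping.keys g1')"
      using e1(2) less.prems(1,2) lam_sub by blast+
    moreover have "Poly_Mapping.keys g2' \<subseteq> Jconn n r" "lam (Poly_Mapping.keys g2')"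
      using e2(2) less.prems(3,4) lam_sub by blast+
    moreover have "cs g1' y = cs g2' y" for y
      using less.prems(5)[of y] e1(1) e2(1) cs_add[of g1' "Poly_Mapping.single J 1" y]
        cs_add[of g2' "Poly_Mapping.single J 1" y] by simp
    ultimately have "g1' = g2'" using less.hyps by blast
    thus ?thesis using e1(1) e2(1) by simp
  qed
qed


end



definition Dset :: "nat \<Rightarrow> nat rel \<Rightarrow> (nat set \<Rightarrow>\<^sub>0 nat) set" where
  "Dset n r = {b + Poly_Mapping.single J1 1 + Poly_Mapping.single J2 1 | b J1 J2.
      Poly_Mapping.keys b \<subseteq> Jconn n r \<and> {J1, J2} \<in> Pi_pairs n r}"

lemma Sring_eq: "Sring n r = KP (\<lambda>g. Poly_Mapping.keys g \<subseteq> Jconn n r)"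
  by (simp add: Sring_def KP_def)

lemma compS_KP: "compS (KP P) f = KP (\<lambda>g. P g \<and> Sdeg g = f)"
  by (auto simp: compS_def KP_def)

lemma Uvar_mult: "(Uvar J1 * Uvar J2 :: (nat set, 'k::field) mpoly) = monom (Poly_Mapping.single J1 1 + Poly_Mapping.single J2 1)"
  by (simp add: Uvar_def monom_def mult_single)

lemma monom_mult: "(monom a * monom b :: ('v, 'k::field) mpoly) = monom (a + b)"
  by (simp add: monom_def mult_single)

lemma Iinit_eq: "(Iinit n r :: (nat set, 'k::field) mpoly set) = KP (\<lambda>g. g \<in> Dset n r)"
proof
  show "(Iinit n r :: (nat set, 'k) mpoly set) \<subseteq> KP (\<lambda>g. g \<in> Dset n r)"
    unfolding Iinit_def kspan_eq
  proof (rule pm.span_minimal[OF _ subspace_KP], safe)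
    fix s :: "(nat set, 'k) mpoly" and J1 J2
    assume s: "s \<in> Sring n r" and p: "{J1, J2} \<in> Pi_pairs n r"
    show "s * (Uvar J1 * Uvar J2) \<in> KP (\<lambda>g. g \<in> Dset n r)"
      unfolding Uvar_mult
    proof (rule keys_mult_KP[of _ "\<lambda>g. Poly_Mapping.keys g \<subseteq> Jconn n r" _ "\<lambda>g. g = Poly_Mapping.single J1 1 + Poly_Mapping.single J2 1"])
      show "s \<in> KP (\<lambda>g. Poly_Mapping.keys g \<subseteq> Jconn n r)" using s by (simp add: Sring_eq)
      show "monom (Poly_Mapping.single J1 1 + Poly_Mapping.single J2 1) \<in> KP (\<lambda>g. g = Poly_Mapping.single J1 1 + Poly_Mapping.single J2 1)"
        by (simp add: KP_def)
      fix x y :: "nat set \<Rightarrow>\<^sub>0 nat" assume "Poly_Mapping.keys x \<subseteq> Jconn n r" "y = Poly_Mapping.single J1 1 + Poly_Mapping.single J2 1"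
      thus "x + y \<in> Dset n r" using p unfolding Dset_def by (auto simp: add.assoc)
    qed
  qed
next
  have "monom ` {g. g \<in> Dset n r} \<subseteq> {s * (Uvar J1 * Uvar J2) | s J1 J2. s \<in> (Sring n r :: (nat set, 'k) mpoly set) \<and> {J1, J2} \<in> Pi_pairs n r}"
  proof safe
    fix g assume "g \<in> Dset n r"
    then obtain b J1 J2 where g: "g = b + Poly_Mapping.single J1 1 + Poly_Mapping.single J2 1"
      "Poly_Mapping.keys b \<subseteq> Jconn n r" "{J1, J2} \<in> Pi_pairs n r" unfolding Dset_def by blast
    have "(monom g :: (nat set, 'k) mpoly) = monom b * (Uvar J1 * Uvar J2)"
      unfolding Uvar_mult monom_mult g(1) by (simp add: add.assoc)
    moreover have "(monom b :: (nat set, 'k) mpoly) \<in> Sring n r" using g(2) by (simp add: Sring_def)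
    ultimately show "\<exists>s J1' J2'. (monom g :: (nat set, 'k) mpoly) = s * (Uvar J1' * Uvar J2') \<and> s \<in> Sring n r \<and> {J1', J2'} \<in> Pi_pairs n r"
      using g(3) by blast
  qed
  hence "pm.span (monom ` {g. g \<in> Dset n r}) \<subseteq> (Iinit n r :: (nat set, 'k) mpoly set)"
    unfolding Iinit_def kspan_eq by (rule pm.span_mono)
  thus "KP (\<lambda>g. g \<in> Dset n r) \<subseteq> (Iinit n r :: (nat set, 'k) mpoly set)" using span_monom by metis
qed

lemma Pi_pairsD: "{J1, J2} \<in> Pi_pairs n r \<Longrightarrow> J1 \<in> Jconn n r \<and> J2 \<in> Jconn n r \<and> J1 \<inter> J2 \<noteq> {} \<and> \<not> J1 \<subseteq> J2 \<and> \<not> J2 \<subseteq> J1"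
  unfolding Pi_pairs_def by (auto simp: doubleton_eq_iff)

lemma D_keys: "Poly_Mapping.keys (b + Poly_Mapping.single J1 1 + Poly_Mapping.single J2 (1::nat)) = Poly_Mapping.keys b \<union> {J1, J2}"
  by (auto simp: in_keys_iff lookup_add lookup_single when_def split: if_splits)

lemma D_iff: assumes "Poly_Mapping.keys g \<subseteq> Jconn n r"
  shows "g \<in> Dset n r \<longleftrightarrow> \<not> lam (Poly_Mapping.keys g)"
proof
  assume "g \<in> Dset n r"
  then obtain b J1 J2 where g: "g = b + Poly_Mapping.single J1 1 + Poly_Mapping.single J2 1"
    "{J1, J2} \<in> Pi_pairs n r" unfolding Dset_def by blast
  have "J1 \<in> Poly_Mapping.keys g" "J2 \<in> Poly_Mapping.keys g" unfolding g(1) D_keys by auto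
  thus "\<not> lam (Poly_Mapping.keys g)" using Pi_pairsD[OF g(2)] unfolding lam_def by blast
next
  assume "\<not> lam (Poly_Mapping.keys g)"
  then obtain J1 J2 where J: "J1 \<in> Poly_Mapping.keys g" "J2 \<in> Poly_Mapping.keys g"
    "J1 \<inter> J2 \<noteq> {}" "\<not> J1 \<subseteq> J2" "\<not> J2 \<subseteq> J1" unfolding lam_def by blast
  hence ne: "J1 \<noteq> J2" by blast
  define b where "b = g - Poly_Mapping.single J1 1 - Poly_Mapping.single J2 1"
  have "g = b + Poly_Mapping.single J1 1 + Poly_Mapping.single J2 1"
  proof (rule poly_mapping_eqI)
    fix k show "Poly_Mapping.lookup g k = Poly_Mapping.lookup (b + Poly_Mapping.single J1 1 + Poly_Mapping.single J2 1) k"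
      using J(1,2) ne by (cases "k = J1"; cases "k = J2") (auto simp: b_def lookup_add lookup_minus lookup_single in_keys_iff)
  qed
  moreover have "Poly_Mapping.keys b \<subseteq> Jconn n r"
    using assms by (auto simp: b_def in_keys_iff lookup_minus)
  moreover have "{J1, J2} \<in> Pi_pairs n r" using J assms unfolding Pi_pairs_def by blast
  ultimately show "g \<in> Dset n r" unfolding Dset_def by blast
qed

lemma D_sub: "g \<in> Dset n r \<Longrightarrow> Poly_Mapping.keys g \<subseteq> Jconn n r"
proof -
  assume "g \<in> Dset n r"
  then obtain b J1 J2 where g: "g = b + Poly_Mapping.single J1 1 + Poly_Mapping.single J2 1"
    "Poly_Mapping.keys b \<subseteq> Jconn n r" "{J1, J2} \<in> Pi_pairs n r" unfolding Dset_def by blast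
  thus ?thesis using Pi_pairsD[OF g(3)] unfolding g(1) D_keys by blast
qed

context poset begin

lemma finite_XS: "finite {g. Poly_Mapping.keys g \<subseteq> Jconn n r \<and> Sdeg g = f}"
proof -
  let ?X = "{g. Poly_Mapping.keys g \<subseteq> Jconn n r \<and> Sdeg g = f}"
  have bound: "Poly_Mapping.lookup g J \<le> tdeg f" if g: "g \<in> ?X" for g J
  proof (cases "J \<in> Poly_Mapping.keys g")
    case True
    hence JJ: "J \<in> Jconn n r" using g by auto
    then obtain x where x: "x \<in> J" by (auto simp: Jconn_def)
    have "Poly_Mapping.lookup g J = (if x \<in> J then Poly_Mapping.lookup g J else 0)" using x by simp
    also have "\<dots> \<le> cs g x" unfolding cs_def by (rule member_le_sum) (use JJ finite_Jc in auto)
    also have "\<dots> = Poly_Mapping.lookup f x" using g Sdeg_eq by auto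
    also have "\<dots> \<le> tdeg f"
    proof (cases "x \<in> Poly_Mapping.keys f")
      case True thus ?thesis unfolding tdeg_def by (intro member_le_sum) auto
    qed (simp add: in_keys_iff)
    finally show ?thesis .
  qed (simp add: in_keys_iff)
  have "inj_on (\<lambda>g. restrict (Poly_Mapping.lookup g) (Jconn n r)) ?X"
  proof (rule inj_onI)
    fix g h assume gh: "g \<in> ?X" "h \<in> ?X" "restrict (Poly_Mapping.lookup g) (Jconn n r) = restrict (Poly_Mapping.lookup h) (Jconn n r)"
    show "g = h"
    proof (rule poly_mapping_eqI)
      fix J show "Poly_Mapping.lookup g J = Poly_Mapping.lookup h J"
      proof (cases "J \<in> Jconn n r")
        case True thus ?thesis using gh(3) by (metis restrict_apply')
      next
        case False
        have "J \<notin> Poly_Mapping.keys g" "J \<notin> Poly_Mapping.keys h" using gh(1,2) False by auto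
        thus ?thesis by (simp add: in_keys_iff)
      qed
    qed
  qed
  moreover have "(\<lambda>g. restrict (Poly_Mapping.lookup g) (Jconn n r)) ` ?X \<subseteq> PiE (Jconn n r) (\<lambda>_. {..tdeg f})"
    using bound by auto
  moreover have "finite (PiE (Jconn n r) (\<lambda>_. {..tdeg f}))" by (rule finite_PiE) (auto simp: finite_Jc)
  ultimately show ?thesis by (rule inj_on_finite)
qed

lemma hilb_SI_eq:
  assumes fk: "Poly_Mapping.keys f \<subseteq> {1..n}"
  shows "hilb_SI TYPE('k::field) n r f = (if f \<in> Aweak n r then 1 else 0)"
proof -
  let ?XS = "{g. Poly_Mapping.keys g \<subseteq> Jconn n r \<and> Sdeg g = f}"
  let ?XD = "{g. g \<in> Dset n r \<and> Sdeg g = f}"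
  let ?L = "{g. Poly_Mapping.keys g \<subseteq> Jconn n r \<and> Sdeg g = f \<and> lam (Poly_Mapping.keys g)}"
  have fin: "finite ?XS" by (rule finite_XS)
  have sub: "?XD \<subseteq> ?XS" using D_sub by blast
  have "hilb_SI TYPE('k) n r f = pm.dim (KP (\<lambda>g. Poly_Mapping.keys g \<subseteq> Jconn n r \<and> Sdeg g = f) :: (nat set, 'k) mpoly set)
      - pm.dim (KP (\<lambda>g. g \<in> Dset n r \<and> Sdeg g = f) :: (nat set, 'k) mpoly set)"
    unfolding hilb_SI_def kdim_eq Sring_eq Iinit_eq compS_KP ..
  also have "\<dots> = card ?XS - card ?XD"
    using dim_KP[where 'k='k, OF fin] dim_KP[where 'k='k, OF finite_subset[OF sub fin]] by simp
  also have "\<dots> = card (?XS - ?XD)" using card_Diff_subset[OF finite_subset[OF sub fin] sub] by simp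
  also have "?XS - ?XD = ?L" using D_iff by blast
  also have "card ?L = (if f \<in> Aweak n r then 1 else 0)"
  proof (cases "f \<in> Aweak n r")
    case True
    obtain g0 where g0: "Poly_Mapping.keys g0 \<subseteq> Jconn n r" "lam (Poly_Mapping.keys g0)"
      "\<forall>x. cs g0 x = Poly_Mapping.lookup f x" using existence[OF True] by blast
    have "?L = {g0}"
    proof
      show "{g0} \<subseteq> ?L" using g0 Sdeg_eq by auto
      show "?L \<subseteq> {g0}"
      proof
        fix g assume g: "g \<in> ?L"
        have cg: "\<forall>x. cs g x = Poly_Mapping.lookup f x" using g Sdeg_eq[of g f] by auto
        have "g = g0"
          by (rule uniqueness) (use g g0 cg in auto)
        thus "g \<in> {g0}" by simp
      qed
    qed
    thus ?thesis using True by simp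
  next
    case False
    have "?L = {}"
    proof (rule ccontr)
      assume "?L \<noteq> {}"
      then obtain g where g: "Poly_Mapping.keys g \<subseteq> Jconn n r" "Sdeg g = f" by blast
      have "f \<in> Aweak n r" unfolding Aweak_def
      proof (intro CollectI conjI allI impI fk)
        fix i j assume "strict_lt r i j"
        hence "cs g j \<le> cs g i" using cs_mono[OF g(1)] by (auto simp: strict_lt_def)
        thus "Poly_Mapping.lookup f j \<le> Poly_Mapping.lookup f i" using g Sdeg_eq by auto
      qed
      thus False using False by simp
    qed
    hence "card ?L = 0" by (simp only: card.empty)
    thus ?thesis using False by simp
  qed
  finally show ?thesis .
qed

end

theorem proposition6p2:
  fixes n :: nat and r :: "nat rel"
  assumes "poset_on n r"
  shows "\<forall>f. Poly_Mapping.keys f \<subseteq> {1..n} \<longrightarrow>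
           hilb_RP TYPE('k::field) n r f = (if f \<in> Aweak n r then 1 else 0) \<and>
           hilb_gr TYPE('k) n r f = (if f \<in> Aweak n r then 1 else 0) \<and>
           hilb_SI TYPE('k) n r f = (if f \<in> Aweak n r then 1 else 0)"
proof -
  interpret poset n r by (rule poset.intro) (rule assms)
  show ?thesis using hilb_RP_eq hilb_gr_eq hilb_SI_eq by blast
qed

end
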